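(* Let $R>0$, let $f\in C_0^\infty(\mathbb{R})$ with $\operatorname{supp}f\subseteq[-R,R]$, and let $g$ be a locally integrable function on $\mathbb{R}$ such that $|g|$ vanishes monotonically at infinity (i.e. $|g(x)|\to0$ as $|x|\to\infty$, with $|g|$ increasing on some half-line $(-\infty,-c]$ and decreasing on some half-line $[c,\infty)$). For $L>0$ define, for $x\in[-L/2,L/2]$, $$h(x):=(f*_Lg-f*_\infty g)(x).$$ Then, with $M:=R\max|f|$, for all sufficiently large $L$: $$h(x)\ \begin{cases}\le M\big(|g(-L/2)|+|g(L/2-R)|\big) & \text{for } x\in[-L/2,-L/2+R),\\ =0 & \text{for } x\in[-L/2+R,\,L/2-R],\\ \le M\big(|g(L/2)|+|g(-L/2+R)|\big) & \text{for } x\in(L/2-R,\,L/2].\end{cases}$$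
   Context: For a function $u$ on $\mathbb{R}$, its periodic restriction $u^{(L)}$ is the $L$-periodic function on $\mathbb{R}$ that coincides with $u$ on $[-L/2,L/2)$. The torus convolution is $(f*_Lg)(x):=\int_{-L/2}^{L/2}f^{(L)}(y)\,g^{(L)}(x-y)\,dy=\int_{-L/2}^{L/2}f(y)\,g^{(L)}(x-y)\,dy$, and $*_\infty$ is the ordinary convolution on $\mathbb{R}$: $(f*_\infty g)(x)=\int_{\mathbb{R}}f(y)g(x-y)\,dy$. *)

theory Defs
  imports "HOL-Analysis.Analysis"
begin

text \<open>Periodic restriction: the L-periodic function agreeing with u on [-L/2, L/2).\<close>
definition per_restr :: "real \<Rightarrow> (real \<Rightarrow> real) \<Rightarrow> real \<Rightarrow> real" where
  "per_restr L u x = u (x - L * of_int \<lfloor>(x + L/2) / L\<rfloor>)"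

definition torus_conv :: "real \<Rightarrow> (real \<Rightarrow> real) \<Rightarrow> (real \<Rightarrow> real) \<Rightarrow> real \<Rightarrow> real" where
  "torus_conv L f g x = (LINT y:{-L/2..L/2}|lborel. per_restr L f y * per_restr L g (x - y))"

definition line_conv :: "(real \<Rightarrow> real) \<Rightarrow> (real \<Rightarrow> real) \<Rightarrow> real \<Rightarrow> real" where
  "line_conv f g x = (LINT y|lborel. f y * g (x - y))"

definition supp :: "(real \<Rightarrow> real) \<Rightarrow> real set" where
  "supp f = closure {x. f x \<noteq> 0}"

definition smooth :: "(real \<Rightarrow> real) \<Rightarrow> bool" where
  "smooth f \<longleftrightarrow> (\<forall>n x. ((deriv ^^ n) f) differentiable (at x))"

definition C0_inf :: "(real \<Rightarrow> real) \<Rightarrow> bool" where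
  "C0_inf f \<longleftrightarrow> smooth f \<and> compact (supp f)"

definition locally_integrable :: "(real \<Rightarrow> real) \<Rightarrow> bool" where
  "locally_integrable g \<longleftrightarrow> (\<forall>K. compact K \<longrightarrow> set_integrable lborel K g)"

definition vanishes_monotonically :: "(real \<Rightarrow> real) \<Rightarrow> bool" where
  "vanishes_monotonically g \<longleftrightarrow>
     ((\<lambda>x. \<bar>g x\<bar>) \<longlongrightarrow> 0) at_top \<and> ((\<lambda>x. \<bar>g x\<bar>) \<longlongrightarrow> 0) at_bot \<and>
     (\<exists>c. (\<forall>x y. x \<le> y \<longrightarrow> y \<le> -c \<longrightarrow> \<bar>g x\<bar> \<le> \<bar>g y\<bar>) \<and>
          (\<forall>x y. c \<le> x \<longrightarrow> x \<le> y \<longrightarrow> \<bar>g y\<bar> \<le> \<bar>g x\<bar>))"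

end

theory Submission imports Defs begin

lemma per_restr_mid: "L > 0 \<Longrightarrow> -L/2 \<le> z \<Longrightarrow> z < L/2 \<Longrightarrow> per_restr L u z = u z"
  unfolding per_restr_def
proof -
  assume a: "L > 0" "-L/2 \<le> z" "z < L/2"
  have "\<lfloor>(z + L/2) / L\<rfloor> = 0" using a by (simp add: floor_eq_iff field_simps)
  then show "u (z - L * of_int \<lfloor>(z + L/2) / L\<rfloor>) = u z" by simp
qed

lemma per_restr_low: "L > 0 \<Longrightarrow> -3*L/2 \<le> z \<Longrightarrow> z < -L/2 \<Longrightarrow> per_restr L u z = u (z + L)"
  unfolding per_restr_def
proof -
  assume a: "L > 0" "-3*L/2 \<le> z" "z < -L/2"
  have "\<lfloor>(z + L/2) / L\<rfloor> = -1" using a by (simp add: floor_eq_iff field_simps)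
  then show "u (z - L * of_int \<lfloor>(z + L/2) / L\<rfloor>) = u (z + L)" by simp
qed

lemma per_restr_high: "L > 0 \<Longrightarrow> L/2 \<le> z \<Longrightarrow> z < 3*L/2 \<Longrightarrow> per_restr L u z = u (z - L)"
  unfolding per_restr_def
proof -
  assume a: "L > 0" "L/2 \<le> z" "z < 3*L/2"
  have "\<lfloor>(z + L/2) / L\<rfloor> = 1" using a by (simp add: floor_eq_iff field_simps)
  then show "u (z - L * of_int \<lfloor>(z + L/2) / L\<rfloor>) = u (z - L)" by simp
qed

lemma conv_integrable:
  fixes f g :: "real \<Rightarrow> real"
  assumes fm: "f \<in> borel_measurable borel" and fb: "\<And>y. \<bar>f y\<bar> \<le> B"
    and fz: "\<And>y. y \<notin> {-R..R} \<Longrightarrow> f y = 0"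
    and gi: "locally_integrable g"
  shows "integrable lborel (\<lambda>y. f y * g (x - y))"
proof -
  have "set_integrable lborel {x-R..x+R} g" using gi unfolding locally_integrable_def by auto
  then have "integrable lborel (\<lambda>z. indicator {x-R..x+R} z *\<^sub>R g z)"
    unfolding set_integrable_def .
  then have i1: "integrable lborel (\<lambda>y. indicator {x-R..x+R} (x + (-1) * y) *\<^sub>R g (x + (-1) * y))"
    by (rule lborel_integrable_real_affine) simp
  have i2: "integrable lborel (\<lambda>y. B * (indicator {x-R..x+R} (x + (-1) * y) *\<^sub>R g (x + (-1) * y)))"
    using i1 by simp
  have eq: "(\<lambda>y. f y * g (x - y)) = (\<lambda>y. f y * (indicator {x-R..x+R} (x + (-1) * y) *\<^sub>R g (x + (-1) * y)))"
  proof
    fix y show "f y * g (x - y) = f y * (indicator {x-R..x+R} (x + (-1) * y) *\<^sub>R g (x + (-1) * y))"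
      using fz[of y] by (cases "y \<in> {-R..R}") (auto simp: indicator_def)
  qed
  show ?thesis
    unfolding eq
  proof (rule Bochner_Integration.integrable_bound[OF i2])
    show "(\<lambda>y. f y * (indicator {x-R..x+R} (x + (-1) * y) *\<^sub>R g (x + (-1) * y))) \<in> borel_measurable lborel"
      using fm borel_measurable_integrable[OF i1] by measurable
    show "AE y in lborel. norm (f y * (indicator {x - R..x + R} (x + - 1 * y) *\<^sub>R g (x + - 1 * y)))
         \<le> norm (B * (indicator {x - R..x + R} (x + - 1 * y) *\<^sub>R g (x + - 1 * y)))"
    proof (rule AE_I2)
      fix y
      have "B \<ge> 0" using fb[of 0] by linarith
      then show "norm (f y * (indicator {x - R..x + R} (x + - 1 * y) *\<^sub>R g (x + - 1 * y)))
         \<le> norm (B * (indicator {x - R..x + R} (x + - 1 * y) *\<^sub>R g (x + - 1 * y)))"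
        using fb[of y] by (simp add: abs_mult mult_right_mono)
    qed
  qed
qed

lemma diff_bound:
  fixes T F0 E :: "real \<Rightarrow> real"
  assumes i1: "integrable lborel F0" and i2: "integrable lborel E" and S: "S \<in> sets borel"
    and T: "\<And>y. T y = F0 y + indicator S y * E y - indicator S y * F0 y"
    and bd: "\<And>y. \<bar>indicator S y * E y - indicator S y * F0 y\<bar> \<le> indicator {p..p+R} y * C"
    and R: "R \<ge> 0"
  shows "\<bar>integral\<^sup>L lborel T - integral\<^sup>L lborel F0\<bar> \<le> R * C"
proof -
  have j1: "integrable lborel (\<lambda>y. indicator S y * E y)"
    using integrable_mult_indicator[OF _ i2, of S] S by simp
  have j2: "integrable lborel (\<lambda>y. indicator S y * F0 y)"
    using integrable_mult_indicator[OF _ i1, of S] S by simp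
  have jd: "integrable lborel (\<lambda>y. indicator S y * E y - indicator S y * F0 y)"
    using j1 j2 by simp
  have jb: "integrable lborel (\<lambda>y. indicator {p..p+R} y * C)"
    proof (rule integrable_mult_left)
    show "integrable lborel (indicat_real {p..p+R})"
      by (rule integrable_real_indicator) (auto simp: emeasure_lborel_Icc_eq)
  qed
  have "T = (\<lambda>y. F0 y + (indicator S y * E y - indicator S y * F0 y))"
    using T by (auto simp: fun_eq_iff)
  then have "integral\<^sup>L lborel T - integral\<^sup>L lborel F0
      = integral\<^sup>L lborel (\<lambda>y. indicator S y * E y - indicator S y * F0 y)"
    using i1 jd by simp
  also have "\<bar>\<dots>\<bar> \<le> integral\<^sup>L lborel (\<lambda>y. indicator {p..p+R} y * C)"
    using Bochner_Integration.integral_norm_bound_integral[OF jd jb] bd by simp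
  also have "\<dots> = R * C" using R by simp
  finally show ?thesis .
qed

lemma abs_diff_bound:
  fixes a b d F P Q :: real
  assumes "\<bar>a\<bar> \<le> F" "\<bar>b\<bar> \<le> P" "\<bar>d\<bar> \<le> Q"
  shows "\<bar>a * b - a * d\<bar> \<le> F * (P + Q)"
proof -
  have "\<bar>a * b - a * d\<bar> = \<bar>a\<bar> * \<bar>b - d\<bar>" by (simp add: abs_mult right_diff_distrib[symmetric])
  also have "\<dots> \<le> F * (P + Q)"
    by (rule mult_mono) (use assms in auto)
  finally show ?thesis .
qed

theorem lemmaA2:
  fixes f g :: "real \<Rightarrow> real" and R :: real
  assumes "R > 0"
    and "C0_inf f" and "supp f \<subseteq> {-R..R}"
    and "locally_integrable g"
    and "vanishes_monotonically g"
  shows "\<exists>L0. \<forall>L \<ge> L0. L > 0 \<longrightarrow>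
    (let M = R * (SUP x. \<bar>f x\<bar>); h = (\<lambda>x. torus_conv L f g x - line_conv f g x) in
      (\<forall>x \<in> {-L/2..<-L/2+R}. h x \<le> M * (\<bar>g (-L/2)\<bar> + \<bar>g (L/2 - R)\<bar>)) \<and>
      (\<forall>x \<in> {-L/2+R..L/2-R}. h x = 0) \<and>
      (\<forall>x \<in> {L/2-R<..L/2}. h x \<le> M * (\<bar>g (L/2)\<bar> + \<bar>g (-L/2 + R)\<bar>)))"
proof -
  note Rpos = assms(1)
  have "\<exists>c. (\<forall>x y. x \<le> y \<longrightarrow> y \<le> -c \<longrightarrow> \<bar>g x\<bar> \<le> \<bar>g y\<bar>) \<and>
          (\<forall>x y. c \<le> x \<longrightarrow> x \<le> y \<longrightarrow> \<bar>g y\<bar> \<le> \<bar>g x\<bar>)"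
    using assms(5) unfolding vanishes_monotonically_def by (rule conjunct2[OF conjunct2])
  then obtain c where c: "(\<forall>x y. x \<le> y \<longrightarrow> y \<le> -c \<longrightarrow> \<bar>g x\<bar> \<le> \<bar>g y\<bar>) \<and>
          (\<forall>x y. c \<le> x \<longrightarrow> x \<le> y \<longrightarrow> \<bar>g y\<bar> \<le> \<bar>g x\<bar>)" by (elim exE)
  have inc: "\<And>x y. x \<le> y \<Longrightarrow> y \<le> -c \<Longrightarrow> \<bar>g x\<bar> \<le> \<bar>g y\<bar>"
    using c by blast
  have dec: "\<And>x y. c \<le> x \<Longrightarrow> x \<le> y \<Longrightarrow> \<bar>g y\<bar> \<le> \<bar>g x\<bar>"
    using c by blast
  have fz: "f y = 0" if "y \<notin> {-R..R}" for y
  proof (rule ccontr)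
    assume "f y \<noteq> 0"
    then have "y \<in> supp f" unfolding supp_def using closure_subset[of "{x. f x \<noteq> 0}"] by blast
    then show False using assms(3) that by blast
  qed
  have cont: "continuous_on UNIV f"
  proof (rule continuous_at_imp_continuous_on, rule ballI)
    fix x :: real
    have "((deriv ^^ 0) f) differentiable (at x)" using assms(2) unfolding C0_inf_def smooth_def by blast
    then show "isCont f x" by (simp add: differentiable_imp_continuous_within)
  qed
  have fm: "f \<in> borel_measurable borel" using cont by (rule borel_measurable_continuous_onI)
  have "compact (f ` {-R..R})"
    by (rule compact_continuous_image) (use cont continuous_on_subset in auto)
  then obtain B where B: "\<And>z. z \<in> f ` {-R..R} \<Longrightarrow> norm z \<le> B"
    using compact_imp_bounded bounded_iff by metis
  have fB: "\<bar>f y\<bar> \<le> B" for y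
  proof (cases "y \<in> {-R..R}")
    case True then show ?thesis using B[of "f y"] by auto
  next
    case False
    have "0 \<in> {-R..R}" using Rpos by auto
    then have "\<bar>f 0\<bar> \<le> B" using B[of "f 0"] by auto
    then show ?thesis using fz[OF False] by simp
  qed
  define F where "F = (SUP x. \<bar>f x\<bar>)"
  have fF: "\<bar>f y\<bar> \<le> F" for y
    unfolding F_def by (rule cSUP_upper) (use fB in \<open>auto intro!: bdd_aboveI\<close>)
  have Fint: "integrable lborel (\<lambda>y. f y * g (x - y))" for x
    by (rule conv_integrable[OF fm fB fz assms(4)])
  define L0 where "L0 = 2 * \<bar>c\<bar> + 4 * R + 1"
  show ?thesis
  proof (intro exI[of _ L0] allI impI)
    fix L :: real assume "L \<ge> L0" "L > 0"
    then have L4: "L > 4 * R" and Lc1: "L/2 - R \<ge> c" and Lc2: "L/2 \<ge> c" and Lc3: "-L/2 + R \<le> -c"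
      using Rpos unfolding L0_def by (auto simp: abs_if split: if_splits)
    have tor: "torus_conv L f g x = integral\<^sup>L lborel (\<lambda>y. f y * per_restr L g (x - y))" for x
      unfolding torus_conv_def set_lebesgue_integral_def
    proof (rule Bochner_Integration.integral_cong[OF refl])
      fix y
      show "indicator {-L/2..L/2} y *\<^sub>R (per_restr L f y * per_restr L g (x - y)) = f y * per_restr L g (x - y)"
      proof (cases "y \<in> {-R..R}")
        case True
        then have "per_restr L f y = f y" using L4 Rpos by (intro per_restr_mid) auto
        then show ?thesis using True L4 Rpos by (auto simp: indicator_def)
      next
        case False
        note f0 = fz[OF False]
        show ?thesis
        proof (cases "y \<in> {-L/2..<L/2}")
          case True
          then have "per_restr L f y = f y" using L4 Rpos by (intro per_restr_mid) auto
          then show ?thesis using f0 by simp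
        next
          case False
          show ?thesis
          proof (cases "y = L/2")
            case True
            then have "per_restr L f y = f (y - L)" using L4 Rpos by (intro per_restr_high) auto
            moreover have "f (y - L) = 0" using True L4 Rpos by (intro fz) auto
            ultimately show ?thesis using f0 by simp
          next
            case False
            then have "y \<notin> {-L/2..L/2}" using \<open>y \<notin> {-L/2..<L/2}\<close> by auto
            then show ?thesis using f0 by simp
          qed
        qed
      qed
    qed
    define h where "h = (\<lambda>x. torus_conv L f g x - line_conv f g x)"
    have line: "line_conv f g x = integral\<^sup>L lborel (\<lambda>y. f y * g (x - y))" for x
      unfolding line_conv_def ..
    have left: "\<bar>h x\<bar> \<le> R * (F * (\<bar>g (L/2 - R)\<bar> + \<bar>g (-L/2)\<bar>))" if x: "x \<in> {-L/2..<-L/2+R}" for x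
      unfolding h_def tor line
    proof (rule diff_bound[OF Fint[of x] Fint[of "x + L"], where S = "{x+L/2<..}" and p = 0])
      show "{x+L/2<..} \<in> sets borel" by simp
      show "R \<ge> 0" using Rpos by simp
      fix y
      show "f y * per_restr L g (x - y) = f y * g (x - y) + indicator {x+L/2<..} y * (f y * g (x + L - y))
          - indicator {x+L/2<..} y * (f y * g (x - y))"
      proof (cases "y \<in> {-R..R}")
        case False then show ?thesis using fz[OF False] by simp
      next
        case True
        show ?thesis
        proof (cases "y > x + L/2")
          case True
          have "per_restr L g (x - y) = g (x - y + L)"
            using True \<open>y \<in> {-R..R}\<close> x L4 Rpos by (intro per_restr_low) auto
          then show ?thesis using True by (simp add: algebra_simps)
        next
          case False
          have "per_restr L g (x - y) = g (x - y)"
            using False \<open>y \<in> {-R..R}\<close> x L4 Rpos by (intro per_restr_mid) auto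
          then show ?thesis using False by simp
        qed
      qed
      show "\<bar>indicator {x+L/2<..} y * (f y * g (x + L - y)) - indicator {x+L/2<..} y * (f y * g (x - y))\<bar>
          \<le> indicator {0..0+R} y * (F * (\<bar>g (L/2 - R)\<bar> + \<bar>g (-L/2)\<bar>))"
      proof (cases "y > x + L/2 \<and> y \<in> {-R..R}")
        case True
        have b1: "\<bar>g (x + L - y)\<bar> \<le> \<bar>g (L/2 - R)\<bar>" using True x Lc1 by (intro dec) auto
        have b2: "\<bar>g (x - y)\<bar> \<le> \<bar>g (-L/2)\<bar>" using True x Lc2 by (intro inc) auto
        have "y \<in> {0..0+R}" using True x by auto
        then show ?thesis using True abs_diff_bound[OF fF b1 b2] by simp
      next
        case False
        have "0 \<le> F" using fF[of 0] by linarith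
        then have "0 \<le> indicator {0..0+R} y * (F * (\<bar>g (L/2 - R)\<bar> + \<bar>g (-L/2)\<bar>))" by simp
        then show ?thesis using False fz[of y] by (auto simp: indicator_def)
      qed
    qed
    have right: "\<bar>h x\<bar> \<le> R * (F * (\<bar>g (-L/2 + R)\<bar> + \<bar>g (L/2)\<bar>))" if x: "x \<in> {L/2-R<..L/2}" for x
      unfolding h_def tor line
    proof (rule diff_bound[OF Fint[of x] Fint[of "x - L"], where S = "{..x-L/2}" and p = "-R"])
      show "{..x-L/2} \<in> sets borel" by simp
      show "R \<ge> 0" using Rpos by simp
      fix y
      show "f y * per_restr L g (x - y) = f y * g (x - y) + indicator {..x-L/2} y * (f y * g (x - L - y))
          - indicator {..x-L/2} y * (f y * g (x - y))"
      proof (cases "y \<in> {-R..R}")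
        case False then show ?thesis using fz[OF False] by simp
      next
        case True
        show ?thesis
        proof (cases "y \<le> x - L/2")
          case True
          have "per_restr L g (x - y) = g (x - y - L)"
            using True \<open>y \<in> {-R..R}\<close> x L4 Rpos by (intro per_restr_high) auto
          then show ?thesis using True by (simp add: algebra_simps)
        next
          case False
          have "per_restr L g (x - y) = g (x - y)"
            using False \<open>y \<in> {-R..R}\<close> x L4 Rpos by (intro per_restr_mid) auto
          then show ?thesis using False by simp
        qed
      qed
      show "\<bar>indicator {..x-L/2} y * (f y * g (x - L - y)) - indicator {..x-L/2} y * (f y * g (x - y))\<bar>
          \<le> indicator {-R..-R+R} y * (F * (\<bar>g (-L/2 + R)\<bar> + \<bar>g (L/2)\<bar>))"
      proof (cases "y \<le> x - L/2 \<and> y \<in> {-R..R}")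
        case True
        have b1: "\<bar>g (x - L - y)\<bar> \<le> \<bar>g (-L/2 + R)\<bar>" using True x Lc3 by (intro inc) auto
        have b2: "\<bar>g (x - y)\<bar> \<le> \<bar>g (L/2)\<bar>" using True x Lc2 by (intro dec) auto
        have "y \<in> {-R..-R+R}" using True x by auto
        then show ?thesis using True abs_diff_bound[OF fF b1 b2] by simp
      next
        case False
        have "0 \<le> F" using fF[of 0] by linarith
        then have "0 \<le> indicator {-R..-R+R} y * (F * (\<bar>g (-L/2 + R)\<bar> + \<bar>g (L/2)\<bar>))" by simp
        then show ?thesis using False fz[of y] by (auto simp: indicator_def)
      qed
    qed
    have mid: "\<bar>h x\<bar> \<le> 0 * \<bar>f (x - L/2) * g (x - L - (x - L/2)) - f (x - L/2) * g (x - (x - L/2))\<bar>"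
      if x: "x \<in> {-L/2+R..L/2-R}" for x
      unfolding h_def tor line
    proof (rule diff_bound[OF Fint[of x] Fint[of "x - L"], where S = "{x-L/2}" and p = "x - L/2"])
      show "{x-L/2} \<in> sets borel" by simp
      show "(0::real) \<ge> 0" by simp
      fix y
      show "f y * per_restr L g (x - y) = f y * g (x - y) + indicator {x-L/2} y * (f y * g (x - L - y))
          - indicator {x-L/2} y * (f y * g (x - y))"
      proof (cases "y \<in> {-R..R}")
        case False then show ?thesis using fz[OF False] by simp
      next
        case True
        show ?thesis
        proof (cases "y = x - L/2")
          case True
          have "per_restr L g (x - y) = g (x - y - L)"
            using True x L4 Rpos by (intro per_restr_high) auto
          moreover have "x - y - L = x - L - y" by simp
          ultimately have "per_restr L g (x - y) = g (x - L - y)" by simp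
          then show ?thesis using True by (simp add: indicator_def)
        next
          case False
          have "per_restr L g (x - y) = g (x - y)"
            using False \<open>y \<in> {-R..R}\<close> x L4 Rpos by (intro per_restr_mid) auto
          then show ?thesis using False by simp
        qed
      qed
      show "\<bar>indicator {x-L/2} y * (f y * g (x - L - y)) - indicator {x-L/2} y * (f y * g (x - y))\<bar>
          \<le> indicator {x - L/2..x - L/2 + 0} y * \<bar>f (x - L/2) * g (x - L - (x - L/2)) - f (x - L/2) * g (x - (x - L/2))\<bar>"
        by (cases "y = x - L/2") (auto simp: indicator_def)
    qed
    show "let M = R * (SUP x. \<bar>f x\<bar>); h = (\<lambda>x. torus_conv L f g x - line_conv f g x) in
      (\<forall>x \<in> {-L/2..<-L/2+R}. h x \<le> M * (\<bar>g (-L/2)\<bar> + \<bar>g (L/2 - R)\<bar>)) \<and>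
      (\<forall>x \<in> {-L/2+R..L/2-R}. h x = 0) \<and>
      (\<forall>x \<in> {L/2-R<..L/2}. h x \<le> M * (\<bar>g (L/2)\<bar> + \<bar>g (-L/2 + R)\<bar>))"
      unfolding Let_def F_def[symmetric] h_def[symmetric]
    proof (intro conjI ballI)
      fix x assume "x \<in> {-L/2..<-L/2+R}"
      then show "h x \<le> R * F * (\<bar>g (-L/2)\<bar> + \<bar>g (L/2 - R)\<bar>)" using left[of x] by (simp add: algebra_simps)
    next
      fix x assume "x \<in> {-L/2+R..L/2-R}"
      then show "h x = 0" using mid[of x] by simp
    next
      fix x assume "x \<in> {L/2-R<..L/2}"
      then show "h x \<le> R * F * (\<bar>g (L/2)\<bar> + \<bar>g (-L/2 + R)\<bar>)" using right[of x] by (simp add: algebra_simps)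
    qed
  qed
qed

end
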